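(* For $\mathbf p\in\mathbb R^k$ with all $p_j>0$ and $\sum_jp_j=1$, define $$R(\mathbf p)=\frac{\|\mathbf p\|_{1/2}^{1/2}}{\|\mathbf p\|_{2/3}},\qquad\text{where }\|\mathbf p\|_r=\Big(\sum_{j=1}^kp_j^r\Big)^{1/r}.$$ Then $R(\mathbf p)\ge1$ for every such $\mathbf p$, and $\sup_{\mathbf p}R(\mathbf p)\in\Theta(k^{1/4})$, the supremum taken over all probability vectors in $\mathbb R^k$ with positive entries; this order is tight. *)

theory Defs
  imports Complex_Main "HOL-Library.Landau_Symbols"
begin

text \<open>Vectors in R^k are represented as functions nat => real, only indices j < k matter.\<close>

definition prob_vec :: "nat \<Rightarrow> (nat \<Rightarrow> real) \<Rightarrow> bool" where
  "prob_vec k p \<longleftrightarrow> (\<forall>j<k. p j > 0) \<and> (\<Sum>j<k. p j) = 1"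

definition lr_norm :: "nat \<Rightarrow> real \<Rightarrow> (nat \<Rightarrow> real) \<Rightarrow> real" where
  "lr_norm k r p = (\<Sum>j<k. p j powr r) powr (1 / r)"

definition ratioR :: "nat \<Rightarrow> (nat \<Rightarrow> real) \<Rightarrow> real" where
  "ratioR k p = lr_norm k (1/2) p powr (1/2) / lr_norm k (2/3) p"

definition supR :: "nat \<Rightarrow> real" where
  "supR k = Sup (ratioR k ` {p. prob_vec k p})"

end

theory Submission
  imports Defs "HOL-Analysis.Convex"
begin

definition SS :: "nat \<Rightarrow> real \<Rightarrow> (nat \<Rightarrow> real) \<Rightarrow> real" where
  "SS k a p = (\<Sum>j<k. p j powr a)"

lemma pv_k: "prob_vec k p \<Longrightarrow> k > 0"
  unfolding prob_vec_def by (cases k) auto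

lemma pv_le1: assumes "prob_vec k p" "j < k" shows "p j \<le> 1"
proof -
  have pos: "\<forall>i<k. p i > 0" and s: "(\<Sum>i<k. p i) = 1" using assms unfolding prob_vec_def by auto
  have "p j \<le> (\<Sum>i<k. p i)"
    by (rule member_le_sum) (use pos assms(2) in \<open>auto intro: less_imp_le\<close>)
  then show ?thesis using s by simp
qed

lemma SS_pos: assumes "prob_vec k p" shows "SS k a p > 0"
proof -
  have "k > 0" using pv_k assms .
  then show ?thesis unfolding SS_def using assms unfolding prob_vec_def
    by (intro sum_pos) auto
qed

lemma ratio_eq: assumes "prob_vec k p"
  shows "ratioR k p = SS k (1/2) p / SS k (2/3) p powr (3/2)"
proof -
  have A: "SS k (1/2) p > 0" "SS k (2/3) p > 0" using SS_pos assms by auto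
  show ?thesis unfolding ratioR_def lr_norm_def SS_def[symmetric]
    using A by (simp add: powr_powr)
qed

lemma holder1: assumes "prob_vec k p"
  shows "SS k (2/3) p powr (3/2) \<le> SS k (1/2) p"
proof -
  define A where "A = SS k (1/2) p"
  have A: "A > 0" using SS_pos assms A_def by auto
  have pos: "\<forall>i<k. p i > 0" and s: "(\<Sum>i<k. p i) = 1" using assms unfolding prob_vec_def by auto
  have each: "p j powr (2/3) / A powr (2/3) \<le> 2/3 * (p j powr (1/2) / A) + 1/3 * p j" if "j < k" for j
  proof -
    have pj: "p j > 0" using pos that by auto
    have "(p j powr (1/2) / A) powr (2/3) * p j powr (1/3) \<le> 2/3 * (p j powr (1/2) / A) + 1/3 * p j"
      by (rule Youngs_inequality_0) (use pj A in auto)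
    moreover have "(p j powr (1/2) / A) powr (2/3) * p j powr (1/3) = p j powr (2/3) / A powr (2/3)"
      using pj A by (simp add: powr_divide powr_powr powr_add[symmetric])
    ultimately show ?thesis by simp
  qed
  have "(\<Sum>j<k. p j powr (2/3) / A powr (2/3)) \<le> (\<Sum>j<k. 2/3 * (p j powr (1/2) / A) + 1/3 * p j)"
    by (rule sum_mono) (use each in auto)
  also have "\<dots> = 2/3 * ((\<Sum>j<k. p j powr (1/2)) / A) + 1/3 * (\<Sum>j<k. p j)"
    by (simp add: sum.distrib sum_distrib_left sum_divide_distrib)
  also have "\<dots> = 1" using A A_def s unfolding SS_def by simp
  finally have "SS k (2/3) p / A powr (2/3) \<le> 1" unfolding SS_def by (simp add: sum_divide_distrib)
  then have "SS k (2/3) p \<le> A powr (2/3)" using A by (simp add: divide_le_eq)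
  then have "SS k (2/3) p powr (3/2) \<le> (A powr (2/3)) powr (3/2)"
    using SS_pos[OF assms, of "2/3"] by (intro powr_mono2) auto
  also have "\<dots> = A" using A by (simp add: powr_powr)
  finally show ?thesis unfolding A_def .
qed

lemma holder2: assumes "prob_vec k p"
  shows "SS k (1/2) p \<le> SS k (2/3) p powr (3/4) * real k powr (1/4)"
proof -
  define B where "B = SS k (2/3) p"
  have B: "B > 0" using SS_pos assms B_def by auto
  have k: "real k > 0" using pv_k assms by auto
  have pos: "\<forall>i<k. p i > 0" using assms unfolding prob_vec_def by auto
  have each: "p j powr (1/2) / (B powr (3/4) * real k powr (1/4)) \<le> 3/4 * (p j powr (2/3) / B) + 1/4 * (1 / real k)" if "j < k" for j
  proof -
    have pj: "p j > 0" using pos that by auto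
    have "(p j powr (2/3) / B) powr (3/4) * (1 / real k) powr (1/4) \<le> 3/4 * (p j powr (2/3) / B) + 1/4 * (1 / real k)"
      by (rule Youngs_inequality_0) (use pj B k in auto)
    moreover have "(p j powr (2/3) / B) powr (3/4) * (1 / real k) powr (1/4) = p j powr (1/2) / (B powr (3/4) * real k powr (1/4))"
      using pj B k by (simp add: powr_divide powr_powr)
    ultimately show ?thesis by simp
  qed
  have "(\<Sum>j<k. p j powr (1/2) / (B powr (3/4) * real k powr (1/4))) \<le> (\<Sum>j<k. 3/4 * (p j powr (2/3) / B) + 1/4 * (1 / real k))"
    by (rule sum_mono) (use each in auto)
  also have "\<dots> = 3/4 * ((\<Sum>j<k. p j powr (2/3)) / B) + 1/4 * (real k / real k)"
    by (simp add: sum.distrib sum_distrib_left sum_divide_distrib)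
  also have "\<dots> = 1" using B B_def k unfolding SS_def by simp
  finally have "SS k (1/2) p / (B powr (3/4) * real k powr (1/4)) \<le> 1" unfolding SS_def by (simp add: sum_divide_distrib)
  then show ?thesis using B k unfolding B_def[symmetric] by (simp add: divide_le_eq)
qed

lemma B_ge1: assumes "prob_vec k p" shows "SS k (2/3) p \<ge> 1"
proof -
  have pos: "\<forall>i<k. p i > 0" and s: "(\<Sum>i<k. p i) = 1" using assms unfolding prob_vec_def by auto
  have "(\<Sum>i<k. p i) \<le> SS k (2/3) p" unfolding SS_def
  proof (rule sum_mono)
    fix j assume "j \<in> {..<k}"
    then have "p j > 0" "p j \<le> 1" using pos pv_le1[OF assms] by auto
    then have "p j powr 1 \<le> p j powr (2/3)" by (intro powr_mono') auto
    then show "p j \<le> p j powr (2/3)" using \<open>p j > 0\<close> by simp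
  qed
  then show ?thesis using s by simp
qed

lemma R_ge1: "prob_vec k p \<Longrightarrow> ratioR k p \<ge> 1"
  using holder1[of k p] SS_pos[of k p "2/3"] by (simp add: ratio_eq)

lemma R_le: assumes "prob_vec k p" shows "ratioR k p \<le> real k powr (1/4)"
proof -
  define B where "B = SS k (2/3) p"
  have B: "B \<ge> 1" using B_ge1 assms B_def by auto
  have "ratioR k p \<le> B powr (3/4) * real k powr (1/4) / B powr (3/2)"
    unfolding ratio_eq[OF assms] B_def using holder2[OF assms] SS_pos[OF assms]
    by (intro divide_right_mono) auto
  also have "\<dots> = real k powr (1/4) / B powr (3/4)"
    using B by (simp add: powr_diff[symmetric] divide_simps) (simp add: powr_add[symmetric])
  also have "\<dots> \<le> real k powr (1/4)"
  proof -
    have "B powr (3/4) \<ge> 1" using B by (intro ge_one_powr_ge_zero) auto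
    then show ?thesis using B mult_left_mono[of 1 "B powr (3/4)" "real k powr (1/4)"]
      by (simp add: divide_le_eq)
  qed
  finally show ?thesis .
qed

lemma lower: assumes "k \<ge> 2"
  shows "\<exists>p. prob_vec k p \<and> ratioR k p \<ge> real k powr (1/4) / 16"
proof -
  obtain m where km: "k = Suc m" and m1: "m \<ge> 1" using assms by (cases k) auto
  define a where "a = real m"
  have a1: "a \<ge> 1" using m1 a_def by auto
  define c where "c = a powr (-3/2) / 2"
  define p where "p = (\<lambda>j::nat. if j = 0 then 1 - a powr (-1/2) / 2 else c)"
  have c0: "c > 0" unfolding c_def using a1 by simp
  have h1: "a powr (-1/2) \<le> 1" using a1 by (simp add: powr_minus_divide ge_one_powr_ge_zero)
  have ac: "a * c = a powr (-1/2) / 2"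
  proof -
    have "a * a powr (-3/2) = a powr 1 * a powr (-3/2)" using a1 by simp
    also have "\<dots> = a powr (-1/2)" unfolding powr_add[symmetric] by simp
    finally show ?thesis unfolding c_def by simp
  qed
  have sum_split: "(\<Sum>j<k. f j) = f 0 + (\<Sum>j<m. f (Suc j))" for f :: "nat \<Rightarrow> real"
    unfolding km by (rule sum.lessThan_Suc_shift)
  have pv: "prob_vec k p"
    unfolding prob_vec_def
  proof
    show "\<forall>j<k. p j > 0" using h1 c0 unfolding p_def by auto
    show "(\<Sum>j<k. p j) = 1" unfolding sum_split using ac a_def by (simp add: p_def)
  qed
  have cA: "c powr (1/2) = a powr (-3/4) * (1/2) powr (1/2)"
    unfolding c_def using a1 by (simp add: powr_divide powr_powr)
  have cB: "c powr (2/3) = a powr (-1) * (1/2) powr (2/3)"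
    unfolding c_def using a1 by (simp add: powr_divide powr_powr)
  have half1: "(1/2::real) powr (1/2) \<ge> 1/2"
  proof -
    have "(1/2::real) powr 1 \<le> (1/2) powr (1/2)" by (rule powr_mono') auto
    then show ?thesis by simp
  qed
  have half2: "(1/2::real) powr (2/3) \<le> 1"
    by (rule powr_le1) auto
  have A: "SS k (1/2) p \<ge> a powr (1/4) / 2"
  proof -
    have "SS k (1/2) p = p 0 powr (1/2) + a * c powr (1/2)"
      unfolding SS_def sum_split by (simp add: p_def a_def)
    also have "\<dots> \<ge> a * c powr (1/2)" by simp
    also have "a * c powr (1/2) = (a powr 1 * a powr (-3/4)) * (1/2) powr (1/2)"
      using a1 cA by simp
    also have "\<dots> = a powr (1/4) * (1/2) powr (1/2)" unfolding powr_add[symmetric] by simp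
    also have "\<dots> \<ge> a powr (1/4) * (1/2)" using half1 by (intro mult_left_mono) auto
    finally show ?thesis by simp
  qed
  have B: "SS k (2/3) p \<le> 2"
  proof -
    have p0: "p 0 powr (2/3) \<le> 1" using h1 c0 unfolding p_def by (intro powr_le1) auto
    have "SS k (2/3) p = p 0 powr (2/3) + a * c powr (2/3)"
      unfolding SS_def sum_split by (simp add: p_def a_def)
    also have "a * c powr (2/3) = (a * a powr (-1)) * (1/2) powr (2/3)" using cB by simp
    also have "a * a powr (-1) = 1" using a1 by (simp add: powr_minus)
    finally show ?thesis using p0 half2 by simp
  qed
  have Bp: "SS k (2/3) p > 0" using SS_pos[OF pv] .
  have B2: "SS k (2/3) p powr (3/2) \<le> 4"
  proof -
    have "SS k (2/3) p powr (3/2) \<le> 2 powr (3/2)" using B Bp by (intro powr_mono2) auto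
    also have "(2::real) powr (3/2) \<le> 2 powr 2" by (intro powr_mono) auto
    finally show ?thesis by simp
  qed
  have R: "ratioR k p \<ge> a powr (1/4) / 8"
  proof -
    have "a powr (1/4) / 8 = (a powr (1/4) / 2) / 4" by simp
    also have "\<dots> \<le> SS k (1/2) p / 4" using A by simp
    also have "\<dots> \<le> SS k (1/2) p / SS k (2/3) p powr (3/2)"
      using B2 Bp SS_pos[OF pv, of "1/2"] by (intro divide_left_mono) auto
    finally show ?thesis using ratio_eq[OF pv] by simp
  qed
  have ka: "real k / 2 \<le> a" using km a_def m1 by auto
  have "real k powr (1/4) / 16 \<le> a powr (1/4) / 8"
  proof -
    have "(real k / 2) powr (1/4) \<le> a powr (1/4)" using ka by (intro powr_mono2) auto
    moreover have "(real k / 2) powr (1/4) = real k powr (1/4) / 2 powr (1/4)" by (simp add: powr_divide)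
    moreover have "(2::real) powr (1/4) \<le> 2 powr 1" by (intro powr_mono) auto
    moreover have "(2::real) powr (1/4) > 0" by simp
    moreover have "real k powr (1/4) / 2 \<le> real k powr (1/4) / 2 powr (1/4)"
      using \<open>(2::real) powr (1/4) \<le> 2 powr 1\<close> by (intro divide_left_mono) auto
    ultimately have "real k powr (1/4) / 2 \<le> a powr (1/4)" by linarith
    then show ?thesis by simp
  qed
  then show ?thesis using pv R by (intro exI[of _ p]) auto
qed

theorem lemma5:
  shows "(\<forall>k p. prob_vec k p \<longrightarrow> ratioR k p \<ge> 1)
       \<and> (\<forall>k\<ge>1. bdd_above (ratioR k ` {p. prob_vec k p}))
       \<and> (\<lambda>k. supR k) \<in> \<Theta>(\<lambda>k. real k powr (1/4))"
proof (intro conjI allI impI)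
  show "prob_vec k p \<Longrightarrow> ratioR k p \<ge> 1" for k p by (rule R_ge1)
  have bdd: "bdd_above (ratioR k ` {p. prob_vec k p})" for k
    using R_le by (intro bdd_aboveI[of _ "real k powr (1/4)"]) auto
  then show "bdd_above (ratioR k ` {p. prob_vec k p})" for k .
  have ev: "1/16 * norm (real k powr (1/4)) \<le> norm (supR k) \<and> norm (supR k) \<le> 1 * norm (real k powr (1/4))"
    if k: "k \<ge> 2" for k
  proof -
    obtain p where pv: "prob_vec k p" and R: "ratioR k p \<ge> real k powr (1/4) / 16"
      using lower[OF k] by blast
    have ne: "ratioR k ` {p. prob_vec k p} \<noteq> {}" using pv by auto
    have up: "supR k \<le> real k powr (1/4)"
      unfolding supR_def using ne R_le by (intro cSup_least) auto
    have lo: "ratioR k p \<le> supR k"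
      unfolding supR_def using bdd pv by (intro cSup_upper) auto
    have "supR k \<ge> 1" using lo R_ge1[OF pv] by simp
    then show ?thesis using up lo R by auto
  qed
  show "(\<lambda>k. supR k) \<in> \<Theta>(\<lambda>k. real k powr (1/4))"
  proof (rule bigthetaI'[of "1/16" 1])
    show "eventually (\<lambda>x. 1/16 * norm (real x powr (1/4)) \<le> norm (supR x) \<and> norm (supR x) \<le> 1 * norm (real x powr (1/4))) at_top"
      by (rule eventually_sequentiallyI[of 2]) (rule ev)
  qed auto
qed

end
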